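(* Let $m\ge 2$, $n\ge 1$, and let $\overrightarrow{K_{1,n}}$ be any orientation of the star $K_{1,n}$. Then the oriented star forest $m\overrightarrow{K_{1,n}}$, the disjoint union of $m$ copies of $\overrightarrow{K_{1,n}}$, is both $\{0\}$-antimagic and $\{0,1\}$-antimagic.
   Context: In an oriented graph $\overrightarrow{G}$, $d(u,v)$ is the length of a shortest directed path from $u$ to $v$ ($d(u,u)=0$, $d(u,v)=\infty$ if there is none). Let $\partial=\max\{d(u,v)<\infty : u,v\in V(\overrightarrow{G})\}$. A distance set is a nonempty $D\subseteq\{0,1,\dots,\partial\}$. The $D$-neighborhood of $u$ is $N_D(u)=\{v : d(u,v)\in D\}$. For a bijection $f:V(\overrightarrow{G})\to\{1,\dots,|V(\overrightarrow{G})|\}$, the $D$-weight of $u$ is $\omega_D(u)=\sum_{v\in N_D(u)} f(v)$. $\overrightarrow{G}$ is $D$-antimagic if $D\subseteq\{0,\dots,\partial\}$ and there is such a bijection $f$ with all $D$-weights pairwise distinct. *)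

theory Defs
  imports Main "HOL-Library.Extended_Nat"
begin

definition oriented_graph :: "'a set \<Rightarrow> ('a \<times> 'a) set \<Rightarrow> bool" where
  "oriented_graph V A \<longleftrightarrow> finite V \<and> A \<subseteq> V \<times> V \<and>
     (\<forall>u v. (u, v) \<in> A \<longrightarrow> (v, u) \<notin> A) \<and> (\<forall>u. (u, u) \<notin> A)"

definition odist :: "('a \<times> 'a) set \<Rightarrow> 'a \<Rightarrow> 'a \<Rightarrow> enat" where
  "odist A u v = (if \<exists>k. (u, v) \<in> A ^^ k then enat (LEAST k. (u, v) \<in> A ^^ k) else \<infinity>)"

definition odiam :: "'a set \<Rightarrow> ('a \<times> 'a) set \<Rightarrow> nat" where
  "odiam V A = Max {k. \<exists>u\<in>V. \<exists>v\<in>V. odist A u v = enat k}"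

definition D_nbhd :: "'a set \<Rightarrow> ('a \<times> 'a) set \<Rightarrow> nat set \<Rightarrow> 'a \<Rightarrow> 'a set" where
  "D_nbhd V A D u = {v \<in> V. \<exists>k\<in>D. odist A u v = enat k}"

definition D_weight :: "'a set \<Rightarrow> ('a \<times> 'a) set \<Rightarrow> nat set \<Rightarrow> ('a \<Rightarrow> nat) \<Rightarrow> 'a \<Rightarrow> nat" where
  "D_weight V A D f u = (\<Sum>v\<in>D_nbhd V A D u. f v)"

definition D_antimagic :: "'a set \<Rightarrow> ('a \<times> 'a) set \<Rightarrow> nat set \<Rightarrow> bool" where
  "D_antimagic V A D \<longleftrightarrow> D \<noteq> {} \<and> D \<subseteq> {0..odiam V A} \<and>
     (\<exists>f. bij_betw f V {1..card V} \<and> inj_on (D_weight V A D f) V)"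

text \<open>The oriented star forest m K_{1,n}: copy j < m has centre (j,0) and leaves
  (j,i), 1 \<le> i \<le> n.  All copies carry the
  same orientation.\<close>
definition star_forest_V :: "nat \<Rightarrow> nat \<Rightarrow> (nat \<times> nat) set" where
  "star_forest_V m n = {..<m} \<times> {0..n}"

definition star_forest_A :: "nat \<Rightarrow> nat \<Rightarrow> (nat \<Rightarrow> bool) \<Rightarrow> ((nat \<times> nat) \<times> (nat \<times> nat)) set" where
  "star_forest_A m n ori =
     {((j, 0), (j, i)) | j i. j < m \<and> 1 \<le> i \<and> i \<le> n \<and> ori i} \<union>
     {((j, i), (j, 0)) | j i. j < m \<and> 1 \<le> i \<and> i \<le> n \<and> \<not> ori i}"

end

theory Submission
  imports Defs
begin

lemma odist0: "odist A u v = enat 0 \<longleftrightarrow> u = v"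
proof
  assume h: "odist A u v = enat 0"
  then have ex: "\<exists>k. (u, v) \<in> A ^^ k" unfolding odist_def by (auto split: if_splits)
  with h have "(LEAST k. (u, v) \<in> A ^^ k) = 0" unfolding odist_def by auto
  moreover have "(u, v) \<in> A ^^ (LEAST k. (u, v) \<in> A ^^ k)" using ex by (rule LeastI_ex)
  ultimately show "u = v" by simp
next
  assume "u = v"
  then have "(u, v) \<in> A ^^ 0" by simp
  then show "odist A u v = enat 0" unfolding odist_def
    by (metis (mono_tags, lifting) Least_eq_0)
qed

lemma odist1: "odist A u v = enat 1 \<longleftrightarrow> u \<noteq> v \<and> (u, v) \<in> A"
proof
  assume h: "odist A u v = enat 1"
  then have ex: "\<exists>k. (u, v) \<in> A ^^ k" unfolding odist_def by (auto split: if_splits)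
  with h have l: "(LEAST k. (u, v) \<in> A ^^ k) = 1" unfolding odist_def by auto
  moreover have "(u, v) \<in> A ^^ (LEAST k. (u, v) \<in> A ^^ k)" using ex by (rule LeastI_ex)
  ultimately have "(u, v) \<in> A" by simp
  moreover have "u \<noteq> v" using h odist0[of A u v] by (metis enat.inject zero_neq_one)
  ultimately show "u \<noteq> v \<and> (u, v) \<in> A" by simp
next
  assume h: "u \<noteq> v \<and> (u, v) \<in> A"
  then have "(u, v) \<in> A ^^ 1" by simp
  moreover have "(LEAST k. (u, v) \<in> A ^^ k) = 1"
  proof (rule Least_equality)
    show "(u, v) \<in> A ^^ 1" using h by simp
    fix y assume "(u, v) \<in> A ^^ y"
    then show "1 \<le> y" using h by (cases y) auto
  qed
  ultimately show "odist A u v = enat 1" unfolding odist_def by (metis one_enat_def)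
qed

lemma nbhd0: "u \<in> V \<Longrightarrow> D_nbhd V A {0} u = {u}"
  unfolding D_nbhd_def using odist0[of A u] by (auto simp: zero_enat_def)

lemma nbhd01: "u \<in> V \<Longrightarrow> D_nbhd V A {0,1} u = insert u {v \<in> V. u \<noteq> v \<and> (u, v) \<in> A}"
  unfolding D_nbhd_def using odist0[of A u] odist1[of A u] by (auto simp: zero_enat_def one_enat_def)

lemma odiam_ge1:
  assumes "finite V" "u \<in> V" "v \<in> V" "u \<noteq> v" "(u, v) \<in> A"
  shows "1 \<le> odiam V A"
proof -
  let ?S = "{k. \<exists>u\<in>V. \<exists>v\<in>V. odist A u v = enat k}"
  have "?S \<subseteq> (\<lambda>(u, v). the_enat (odist A u v)) ` (V \<times> V)"
    by (force)
  then have "finite ?S" using assms(1) by (meson finite_SigmaI finite_imageI finite_subset)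
  moreover have "1 \<in> ?S" using assms odist1[of A u v] by blast
  ultimately show ?thesis unfolding odiam_def by (simp add: Max_ge)
qed


definition Os :: "nat \<Rightarrow> (nat \<Rightarrow> bool) \<Rightarrow> nat set" where
  "Os n ori = {i \<in> {1..n}. ori i}"
definition Is :: "nat \<Rightarrow> (nat \<Rightarrow> bool) \<Rightarrow> nat set" where
  "Is n ori = {i \<in> {1..n}. \<not> ori i}"

definition wt :: "nat \<Rightarrow> (nat \<Rightarrow> bool) \<Rightarrow> (nat \<times> nat \<Rightarrow> nat) \<Rightarrow> nat \<times> nat \<Rightarrow> nat" where
  "wt n ori f u = (if snd u = 0 then f u + (\<Sum>i\<in>Os n ori. f (fst u, i))
     else if ori (snd u) then f u else f u + f (fst u, 0))"

lemma nb_star: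
  assumes "j < m" "i \<le> n"
  shows "D_nbhd (star_forest_V m n) (star_forest_A m n ori) {0,1} (j, i) =
    (if i = 0 then insert (j, 0) ((\<lambda>i. (j, i)) ` Os n ori)
     else if ori i then {(j, i)} else {(j, i), (j, 0)})"
  using assms
  by (subst nbhd01) (auto simp: star_forest_V_def star_forest_A_def Os_def)

lemma weight_star:
  assumes "j < m" "i \<le> n"
  shows "D_weight (star_forest_V m n) (star_forest_A m n ori) {0,1} f (j, i) = wt n ori f (j, i)"
proof -
  have "inj_on (\<lambda>i. (j, i)) (Os n ori)" by (auto simp: inj_on_def)
  moreover have "(j, 0) \<notin> (\<lambda>i. (j, i)) ` Os n ori" by (auto simp: Os_def)
  moreover have "finite (Os n ori)" by (auto simp: Os_def)
  ultimately show ?thesis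
    unfolding D_weight_def nb_star[OF assms]
    by (simp add: wt_def sum.reindex)
qed

lemma card_OI: "card (Os n ori) + card (Is n ori) = n"
proof -
  have "Os n ori \<union> Is n ori = {1..n}" "Os n ori \<inter> Is n ori = {}"
    by (auto simp: Os_def Is_def)
  then show ?thesis
    by (metis card_Un_disjoint card_atLeastAtMost diff_Suc_1 finite_Un finite_atLeastAtMost)
qed

lemma fin_OI: "finite (Os n ori)" "finite (Is n ori)"
  by (auto simp: Os_def Is_def)

lemma blk:
  fixes a b c j j' :: nat
  assumes "a < b" "c < b" "j * b + a = j' * b + c"
  shows "j = j' \<and> a = c"
proof -
  have "(j * b + a) div b = j" "(j * b + a) mod b = a" using assms(1) by auto
  moreover have "(j' * b + c) div b = j'" "(j' * b + c) mod b = c" using assms(2) by auto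
  ultimately show ?thesis using assms(3) by metis
qed

lemma blk_le:
  fixes j m q k :: nat
  assumes "j < m" "k \<le> q"
  shows "j * q + k \<le> m * q"
proof -
  have "(j + 1) * q \<le> m * q" using assms by (intro mult_le_mono1) auto
  then show ?thesis using assms by (simp add: algebra_simps)
qed

lemma card_V: "card (star_forest_V m n) = m * (n + 1)"
  by (simp add: star_forest_V_def card_cartesian_product)

lemma bij_from_inj:
  assumes "finite V" "inj_on f V" "f ` V \<subseteq> {1..N}" "card V = N"
  shows "bij_betw f V {1..(N::nat)}"
proof -
  have "card (f ` V) = card {1..N}" using assms by (simp add: card_image)
  then have "f ` V = {1..N}" using assms by (intro card_subset_eq) auto
  then show ?thesis using assms by (simp add: bij_betw_def)
qed


lemma blk1:
  fixes a b c j j' :: nat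
  assumes "1 \<le> a" "a \<le> b" "1 \<le> c" "c \<le> b" "j * b + a = j' * b + c"
  shows "j = j' \<and> a = c"
proof -
  have "j * b + (a - 1) = j' * b + (c - 1)" using assms by simp
  then show ?thesis using blk[of "a - 1" b "c - 1" j j'] assms by auto
qed

lemma perm_ex:
  fixes A :: "nat set"
  assumes "finite A"
  obtains \<pi> where "bij_betw \<pi> A {1..card A}"
  using finite_same_card_bij[OF assms, of "{1..card A}"] by auto

lemma caseX:
  assumes m2: "m \<ge> 2" and n1: "n \<ge> 1"
    and nonz: "card (Os n ori) \<ge> 2 \<or> card (Is n ori) = 0"
  shows "\<exists>f. bij_betw f (star_forest_V m n) {1..m*(n+1)} \<and> inj_on (wt n ori f) (star_forest_V m n)"
proof -
  define p where "p = card (Os n ori)"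
  define q where "q = card (Is n ori)"
  have pq: "p + q = n" using card_OI unfolding p_def q_def by simp
  have mn: "m * q + m * p = m * n" using pq by (metis add.commute add_mult_distrib2)
  obtain \<pi>O where bO: "bij_betw \<pi>O (Os n ori) {1..p}" using perm_ex[OF fin_OI(1)] p_def by metis
  obtain \<pi>I where bI: "bij_betw \<pi>I (Is n ori) {1..q}" using perm_ex[OF fin_OI(2)] q_def by metis
  have p1: "p \<ge> 1" using nonz pq n1 unfolding p_def q_def by auto
  have rO: "1 \<le> \<pi>O i \<and> \<pi>O i \<le> p" if "i \<in> Os n ori" for i
    using bO that by (auto simp: bij_betw_def)
  have rI: "1 \<le> \<pi>I i \<and> \<pi>I i \<le> q" if "i \<in> Is n ori" for i
    using bI that by (auto simp: bij_betw_def)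
  have iO: "i = i'" if "i \<in> Os n ori" "i' \<in> Os n ori" "\<pi>O i = \<pi>O i'" for i i'
    using bO that by (auto simp: bij_betw_def inj_on_def)
  have iI: "i = i'" if "i \<in> Is n ori" "i' \<in> Is n ori" "\<pi>I i = \<pi>I i'" for i i'
    using bI that by (auto simp: bij_betw_def inj_on_def)
  have memO: "i \<in> Os n ori" if "i \<noteq> 0" "i \<le> n" "ori i" for i using that by (auto simp: Os_def)
  have memI: "i \<in> Is n ori" if "i \<noteq> 0" "i \<le> n" "\<not> ori i" for i using that by (auto simp: Is_def)
  have q1: "q \<ge> 1" if "i \<in> Is n ori" for i
    using that fin_OI(2) unfolding q_def by (metis One_nat_def Suc_leI card_gt_0_iff empty_iff)
  have p2: "p \<ge> 2" if "i \<in> Is n ori" for i using q1[OF that] nonz unfolding p_def q_def by auto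
  define f where "f = (\<lambda>(j, i). if i = 0 then m * n + 1 + j
      else if ori i then m * q + j * p + \<pi>O i else j * q + \<pi>I i)"
  let ?V = "star_forest_V m n"
  have V: "(j, i) \<in> ?V \<longleftrightarrow> j < m \<and> i \<le> n" for j i by (auto simp: star_forest_V_def)
  have fC: "f (j, 0) = m * n + 1 + j" for j by (simp add: f_def)
  have fO: "f (j, i) = m * q + j * p + \<pi>O i" if "i \<noteq> 0" "ori i" for j i using that by (simp add: f_def)
  have fI: "f (j, i) = j * q + \<pi>I i" if "i \<noteq> 0" "\<not> ori i" for j i using that by (simp add: f_def)
  have bdO: "j * p + \<pi>O i \<le> m * p" if "j < m" "i \<in> Os n ori" for j i
    using blk_le[OF that(1), of "\<pi>O i" p] rO[OF that(2)] by simp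
  have bdI: "j * q + \<pi>I i \<le> m * q" if "j < m" "i \<in> Is n ori" for j i
    using blk_le[OF that(1), of "\<pi>I i" q] rI[OF that(2)] by simp
  define S where "S j = (\<Sum>i\<in>Os n ori. f (j, i))" for j
  have S_eq: "S j = (\<Sum>i\<in>Os n ori. m * q + j * p + \<pi>O i)" for j
    unfolding S_def by (rule sum.cong) (auto simp: Os_def fO)
  have S_lb: "S j \<ge> p * (m * q + 1)" for j
  proof -
    have "(\<Sum>i\<in>Os n ori. m * q + 1) \<le> (\<Sum>i\<in>Os n ori. m * q + j * p + \<pi>O i)"
    proof (rule sum_mono)
      fix i assume "i \<in> Os n ori"
      then have "1 \<le> \<pi>O i" using rO by blast
      then show "m * q + 1 \<le> m * q + j * p + \<pi>O i" by linarith
    qed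
    then show ?thesis unfolding S_eq p_def by simp
  qed
  have ne: "Os n ori \<noteq> {}" using p1 unfolding p_def by auto
  have S_mono: "S j < S j'" if "j < j'" for j j'
  proof -
    have "j * p < j' * p" using that p1 by simp
    then have "(\<Sum>i\<in>Os n ori. m * q + j * p + \<pi>O i) < (\<Sum>i\<in>Os n ori. m * q + j' * p + \<pi>O i)"
      by (intro sum_strict_mono fin_OI ne) auto
    then show ?thesis unfolding S_eq .
  qed
  have wC: "wt n ori f (j, 0) = m * n + 1 + j + S j" for j by (simp add: wt_def fC S_def)
  have wO: "wt n ori f (j, i) = m * q + j * p + \<pi>O i" if "i \<noteq> 0" "ori i" for j i
    using that by (simp add: wt_def fO)
  have wI: "wt n ori f (j, i) = j * q + \<pi>I i + (m * n + 1 + j)" if "i \<noteq> 0" "\<not> ori i" for j i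
    using that by (simp add: wt_def fI fC)
  have injf: "inj_on f ?V"
  proof (rule inj_onI)
    fix x y assume xV: "x \<in> ?V" and yV: "y \<in> ?V" and e: "f x = f y"
    obtain j i where x: "x = (j, i)" by fastforce
    obtain j' i' where y: "y = (j', i')" by fastforce
    have j: "j < m" "i \<le> n" "j' < m" "i' \<le> n" using xV yV x y V by auto
    consider "i = 0" | "i \<noteq> 0" "ori i" | "i \<noteq> 0" "\<not> ori i" by blast
    then show "x = y"
    proof cases
      case 1
      consider "i' = 0" | "i' \<noteq> 0" "ori i'" | "i' \<noteq> 0" "\<not> ori i'" by blast
      then show ?thesis
      proof cases
        case 1 then show ?thesis using e x y \<open>i = 0\<close> fC by simp
      next
        case 2
        have "f x = m * n + 1 + j" using x \<open>i = 0\<close> fC by simp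
        moreover have "f y \<le> m * n" using y fO[OF 2] bdO[OF j(3) memO[OF 2(1) j(4) 2(2)]] mn by simp
        ultimately show ?thesis using e by simp
      next
        case 3
        have "f x = m * n + 1 + j" using x \<open>i = 0\<close> fC by simp
        moreover have "f y \<le> m * n" using y fI[OF 3] bdI[OF j(3) memI[OF 3(1) j(4) 3(2)]] mn by simp
        ultimately show ?thesis using e by simp
      qed
    next
      case 2
      consider "i' = 0" | "i' \<noteq> 0" "ori i'" | "i' \<noteq> 0" "\<not> ori i'" by blast
      then show ?thesis
      proof cases
        case 1
        have "f y = m * n + 1 + j'" using y 1 fC by simp
        moreover have "f x \<le> m * n" using x fO[OF 2] bdO[OF j(1) memO[OF 2(1) j(2) 2(2)]] mn by simp
        ultimately show ?thesis using e by simp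
      next
        case 3
        have "f x \<ge> m * q + 1" using x fO[OF 2] rO[OF memO[OF 2(1) j(2) 2(2)]] by simp
        moreover have "f y \<le> m * q" using y fI[OF 3] bdI[OF j(3) memI[OF 3(1) j(4) 3(2)]] by simp
        ultimately show ?thesis using e by simp
      next
        case c: 2
        have "j * p + \<pi>O i = j' * p + \<pi>O i'" using e x y 2 c fO by simp
        then have "j = j' \<and> \<pi>O i = \<pi>O i'"
          using blk1 rO[OF memO[OF 2(1) j(2) 2(2)]] rO[OF memO[OF c(1) j(4) c(2)]] by blast
        then show ?thesis using iO[OF memO[OF 2(1) j(2) 2(2)] memO[OF c(1) j(4) c(2)]] x y by blast
      qed
    next
      case 3
      consider "i' = 0" | "i' \<noteq> 0" "ori i'" | "i' \<noteq> 0" "\<not> ori i'" by blast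
      then show ?thesis
      proof cases
        case 1
        have "f y = m * n + 1 + j'" using y 1 fC by simp
        moreover have "f x \<le> m * n" using x fI[OF 3] bdI[OF j(1) memI[OF 3(1) j(2) 3(2)]] mn by simp
        ultimately show ?thesis using e by simp
      next
        case 2
        have "f y \<ge> m * q + 1" using y fO[OF 2] rO[OF memO[OF 2(1) j(4) 2(2)]] by simp
        moreover have "f x \<le> m * q" using x fI[OF 3] bdI[OF j(1) memI[OF 3(1) j(2) 3(2)]] by simp
        ultimately show ?thesis using e by simp
      next
        case c: 3
        have "j * q + \<pi>I i = j' * q + \<pi>I i'" using e x y 3 c fI by simp
        then have "j = j' \<and> \<pi>I i = \<pi>I i'"
          using blk1 rI[OF memI[OF 3(1) j(2) 3(2)]] rI[OF memI[OF c(1) j(4) c(2)]] by blast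
        then show ?thesis using iI[OF memI[OF 3(1) j(2) 3(2)] memI[OF c(1) j(4) c(2)]] x y by blast
      qed
    qed
  qed
  have rng: "f ` ?V \<subseteq> {1..m*(n+1)}"
  proof
    fix z assume "z \<in> f ` ?V"
    then obtain j i where z: "z = f (j, i)" and j: "j < m" "i \<le> n" using V by auto
    have "m * (n + 1) = m * n + m" by simp
    moreover consider "i = 0" | "i \<noteq> 0" "ori i" | "i \<noteq> 0" "\<not> ori i" by blast
    then have "1 \<le> z \<and> z \<le> m * n + m"
    proof cases
      case 1 then show ?thesis using z fC j by simp
    next
      case 2 then show ?thesis using z fO[OF 2] bdO[OF j(1) memO[OF 2(1) j(2) 2(2)]] rO[OF memO[OF 2(1) j(2) 2(2)]] mn by simp
    next
      case 3 then show ?thesis using z fI[OF 3] bdI[OF j(1) memI[OF 3(1) j(2) 3(2)]] rI[OF memI[OF 3(1) j(2) 3(2)]] mn by simp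
    qed
    ultimately show "z \<in> {1..m*(n+1)}" by simp
  qed
  have bij: "bij_betw f ?V {1..m*(n+1)}"
    by (rule bij_from_inj[OF _ injf rng]) (simp_all add: card_V star_forest_V_def)
  have injw: "inj_on (wt n ori f) ?V"
  proof (rule inj_onI)
    fix x y assume xV: "x \<in> ?V" and yV: "y \<in> ?V" and e: "wt n ori f x = wt n ori f y"
    obtain j i where x: "x = (j, i)" by fastforce
    obtain j' i' where y: "y = (j', i')" by fastforce
    have j: "j < m" "i \<le> n" "j' < m" "i' \<le> n" using xV yV x y V by auto
    have CC: "j = j'" if "m * n + 1 + j + S j = m * n + 1 + j' + S j'" for j j'
    proof (rule ccontr)
      assume "j \<noteq> j'"
      then consider "j < j'" | "j' < j" by linarith
      then show False
      proof cases
        case 1 then show False using S_mono[OF 1] that by linarith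
      next
        case 2 then show False using S_mono[OF 2] that by linarith
      qed
    qed
    have CO: "m * n + 1 + j + S j \<noteq> m * q + j' * p + \<pi>O i'" if "j' < m" "i' \<in> Os n ori" for j j' i'
      using bdO[OF that] mn by linarith
    have CI: "m * n + 1 + j + S j \<noteq> j' * q + \<pi>I i' + (m * n + 1 + j')" if "j' < m" "i' \<in> Is n ori" for j j' i'
    proof -
      have "m \<le> m * q" using q1[OF that(2)] by simp
      moreover have "2 * (m * q + 1) \<le> p * (m * q + 1)" using p2[OF that(2)] by (intro mult_le_mono1)
      ultimately have "2 * (m * q) + 2 \<le> S j" using S_lb[of j] by simp
      then show ?thesis using bdI[OF that] that(1) \<open>m \<le> m * q\<close> by linarith
    qed
    have OI: "m * q + j * p + \<pi>O i \<noteq> j' * q + \<pi>I i' + (m * n + 1 + j')" if "j < m" "i \<in> Os n ori" for j j' i i'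
      using bdO[OF that] mn by linarith
    consider "i = 0" | "i \<noteq> 0" "ori i" | "i \<noteq> 0" "\<not> ori i" by blast
    then show "x = y"
    proof cases
      case 1
      consider "i' = 0" | "i' \<noteq> 0" "ori i'" | "i' \<noteq> 0" "\<not> ori i'" by blast
      then show ?thesis
      proof cases
        case 1
        have "m * n + 1 + j + S j = m * n + 1 + j' + S j'" using e x y \<open>i = 0\<close> 1 wC by simp
        then have "j = j'" by (rule CC)
        then show ?thesis using x y \<open>i = 0\<close> 1 by simp
      next
        case 2
        have ex1: "wt n ori f x = m * n + 1 + j + S j" using x \<open>i = 0\<close> wC by simp
        have ex2: "wt n ori f y = m * q + j' * p + \<pi>O i'" using y 2 wO by simp
        have "m * n + 1 + j + S j = m * q + j' * p + \<pi>O i'" using e unfolding ex1 ex2 .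
        with CO[OF j(3) memO[OF 2(1) j(4) 2(2)]] show ?thesis by contradiction
      next
        case 3
        have ex1: "wt n ori f x = m * n + 1 + j + S j" using x \<open>i = 0\<close> wC by simp
        have ex2: "wt n ori f y = j' * q + \<pi>I i' + (m * n + 1 + j')" using y 3 wI by simp
        have "m * n + 1 + j + S j = j' * q + \<pi>I i' + (m * n + 1 + j')" using e unfolding ex1 ex2 .
        with CI[OF j(3) memI[OF 3(1) j(4) 3(2)]] show ?thesis by contradiction
      qed
    next
      case 2
      consider "i' = 0" | "i' \<noteq> 0" "ori i'" | "i' \<noteq> 0" "\<not> ori i'" by blast
      then show ?thesis
      proof cases
        case 1
        have ex1: "wt n ori f y = m * n + 1 + j' + S j'" using y 1 wC by simp
        have ex2: "wt n ori f x = m * q + j * p + \<pi>O i" using x 2 wO by simp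
        have "m * n + 1 + j' + S j' = m * q + j * p + \<pi>O i" using e[symmetric] unfolding ex1 ex2 .
        with CO[OF j(1) memO[OF 2(1) j(2) 2(2)]] show ?thesis by contradiction
      next
        case 3
        have ex1: "wt n ori f x = m * q + j * p + \<pi>O i" using x 2 wO by simp
        have ex2: "wt n ori f y = j' * q + \<pi>I i' + (m * n + 1 + j')" using y 3 wI by simp
        have "m * q + j * p + \<pi>O i = j' * q + \<pi>I i' + (m * n + 1 + j')" using e unfolding ex1 ex2 .
        with OI[OF j(1) memO[OF 2(1) j(2) 2(2)]] show ?thesis by contradiction
      next
        case c: 2
        have "j * p + \<pi>O i = j' * p + \<pi>O i'" using e x y 2 c wO by simp
        then have "j = j' \<and> \<pi>O i = \<pi>O i'"
          using blk1 rO[OF memO[OF 2(1) j(2) 2(2)]] rO[OF memO[OF c(1) j(4) c(2)]] by blast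
        then show ?thesis using iO[OF memO[OF 2(1) j(2) 2(2)] memO[OF c(1) j(4) c(2)]] x y by blast
      qed
    next
      case 3
      consider "i' = 0" | "i' \<noteq> 0" "ori i'" | "i' \<noteq> 0" "\<not> ori i'" by blast
      then show ?thesis
      proof cases
        case 1
        have ex1: "wt n ori f y = m * n + 1 + j' + S j'" using y 1 wC by simp
        have ex2: "wt n ori f x = j * q + \<pi>I i + (m * n + 1 + j)" using x 3 wI by simp
        have "m * n + 1 + j' + S j' = j * q + \<pi>I i + (m * n + 1 + j)" using e[symmetric] unfolding ex1 ex2 .
        with CI[OF j(1) memI[OF 3(1) j(2) 3(2)]] show ?thesis by contradiction
      next
        case 2
        have ex1: "wt n ori f y = m * q + j' * p + \<pi>O i'" using y 2 wO by simp
        have ex2: "wt n ori f x = j * q + \<pi>I i + (m * n + 1 + j)" using x 3 wI by simp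
        have "m * q + j' * p + \<pi>O i' = j * q + \<pi>I i + (m * n + 1 + j)" using e[symmetric] unfolding ex1 ex2 .
        with OI[OF j(3) memO[OF 2(1) j(4) 2(2)]] show ?thesis by contradiction
      next
        case c: 3
        have "j * (q + 1) + \<pi>I i = j' * (q + 1) + \<pi>I i'" using e x y 3 c wI by (simp add: algebra_simps)
        moreover have "\<pi>I i < q + 1" "\<pi>I i' < q + 1"
          using rI[OF memI[OF 3(1) j(2) 3(2)]] rI[OF memI[OF c(1) j(4) c(2)]] by auto
        ultimately have "j = j' \<and> \<pi>I i = \<pi>I i'" using blk by blast
        then show ?thesis using iI[OF memI[OF 3(1) j(2) 3(2)] memI[OF c(1) j(4) c(2)]] x y by blast
      qed
    qed
  qed
  show ?thesis using bij injw by blast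
qed


lemma caseP1:
  assumes m2: "m \<ge> 2" and n1: "n \<ge> 1"
    and p1: "card (Os n ori) = 1"
  shows "\<exists>f. bij_betw f (star_forest_V m n) {1..m*(n+1)} \<and> inj_on (wt n ori f) (star_forest_V m n)"
proof -
  define q where "q = card (Is n ori)"
  have pq: "1 + q = n" using card_OI[of n ori] p1 unfolding q_def by simp
  obtain \<pi>I where bI: "bij_betw \<pi>I (Is n ori) {1..q}" using perm_ex[OF fin_OI(2)] q_def by metis
  have rI: "1 \<le> \<pi>I i \<and> \<pi>I i \<le> q" if "i \<in> Is n ori" for i
    using bI that by (auto simp: bij_betw_def)
  have iI: "i = i'" if "i \<in> Is n ori" "i' \<in> Is n ori" "\<pi>I i = \<pi>I i'" for i i'
    using bI that by (auto simp: bij_betw_def inj_on_def)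
  obtain oo where Oo: "Os n ori = {oo}" using p1 by (rule card_1_singletonE)
  have memO: "i = oo" if "i \<noteq> 0" "i \<le> n" "ori i" for i
  proof -
    have "i \<in> Os n ori" using that by (simp add: Os_def)
    then show ?thesis unfolding Oo by simp
  qed
  have memI: "i \<in> Is n ori" if "i \<noteq> 0" "i \<le> n" "\<not> ori i" for i using that by (auto simp: Is_def)
  define g where "g i = (if ori i then 1 else 1 + \<pi>I i)" for i
  have rg: "1 \<le> g i \<and> g i \<le> n" if "i \<noteq> 0" "i \<le> n" for i
    using rI[OF memI[OF that]] pq by (auto simp: g_def)
  have ig: "i = i'" if "i \<noteq> 0" "i \<le> n" "i' \<noteq> 0" "i' \<le> n" "g i = g i'" for i i'
  proof (cases "ori i")
    case True
    then show ?thesis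
    proof (cases "ori i'")
      case True then show ?thesis using memO[OF that(1,2) \<open>ori i\<close>] memO[OF that(3,4) True] by simp
    next
      case False then show ?thesis using that \<open>ori i\<close> rI[OF memI[of i']] by (auto simp: g_def)
    qed
  next
    case False
    then show ?thesis
    proof (cases "ori i'")
      case True then show ?thesis using that \<open>\<not> ori i\<close> rI[OF memI[of i]] by (auto simp: g_def)
    next
      case F: False then show ?thesis using that \<open>\<not> ori i\<close> iI[OF memI[of i] memI[of i']] by (auto simp: g_def)
    qed
  qed
  define f where "f = (\<lambda>(j, i). if i = 0 then m * n + 1 + j else j * n + g i)"
  let ?V = "star_forest_V m n"
  have V: "(j, i) \<in> ?V \<longleftrightarrow> j < m \<and> i \<le> n" for j i by (auto simp: star_forest_V_def)
  have fC: "f (j, 0) = m * n + 1 + j" for j by (simp add: f_def)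
  have fL: "f (j, i) = j * n + g i" if "i \<noteq> 0" for j i using that by (simp add: f_def)
  have bdL: "j * n + g i \<le> m * n" if "j < m" "i \<noteq> 0" "i \<le> n" for j i
    using blk_le[OF that(1), of "g i" n] rg[OF that(2,3)] by simp
  have S: "(\<Sum>i\<in>Os n ori. f (j, i)) = j * n + 1" for j
  proof -
    have "oo \<in> Os n ori" unfolding Oo by simp
    then have "oo \<noteq> 0" "ori oo" by (simp_all add: Os_def)
    then show ?thesis using Oo fL by (simp add: g_def)
  qed
  have wC: "wt n ori f (j, 0) = m * n + 2 + j * (n + 1) + 0" for j by (simp add: wt_def fC S)
  have wO: "wt n ori f (j, i) = j * n + 1" if "i \<noteq> 0" "ori i" for j i
    using that by (simp add: wt_def fL g_def)
  have wI: "wt n ori f (j, i) = m * n + 2 + j * (n + 1) + \<pi>I i" if "i \<noteq> 0" "\<not> ori i" for j i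
    using that by (simp add: wt_def fL fC g_def algebra_simps)
  have injf: "inj_on f ?V"
  proof (rule inj_onI)
    fix x y assume xV: "x \<in> ?V" and yV: "y \<in> ?V" and e: "f x = f y"
    obtain j i where x: "x = (j, i)" by fastforce
    obtain j' i' where y: "y = (j', i')" by fastforce
    have j: "j < m" "i \<le> n" "j' < m" "i' \<le> n" using xV yV x y V by auto
    show "x = y"
    proof (cases "i = 0")
      case True
      show ?thesis
      proof (cases "i' = 0")
        case True then show ?thesis using e x y \<open>i = 0\<close> fC by simp
      next
        case False
        have "f x = m * n + 1 + j" using x \<open>i = 0\<close> fC by simp
        moreover have "f y \<le> m * n" using y fL[OF False] bdL[OF j(3) False j(4)] by simp
        ultimately show ?thesis using e by simp
      qed
    next
      case False
      show ?thesis
      proof (cases "i' = 0")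
        case True
        have "f y = m * n + 1 + j'" using y True fC by simp
        moreover have "f x \<le> m * n" using x fL[OF False] bdL[OF j(1) False j(2)] by simp
        ultimately show ?thesis using e by simp
      next
        case F: False
        have "j * n + g i = j' * n + g i'" using e x y fL False F by simp
        then have "j = j' \<and> g i = g i'" using blk1 rg[OF False j(2)] rg[OF F j(4)] by blast
        then show ?thesis using ig[OF False j(2) F j(4)] x y by blast
      qed
    qed
  qed
  have rng: "f ` ?V \<subseteq> {1..m*(n+1)}"
  proof
    fix z assume "z \<in> f ` ?V"
    then obtain j i where z: "z = f (j, i)" and j: "j < m" "i \<le> n" using V by auto
    have "1 \<le> z \<and> z \<le> m * n + m"
    proof (cases "i = 0")
      case True then show ?thesis using z fC j by simp
    next
      case False then show ?thesis using z fL[OF False] bdL[OF j(1) False j(2)] rg[OF False j(2)] by simp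
    qed
    then show "z \<in> {1..m*(n+1)}" by simp
  qed
  have bij: "bij_betw f ?V {1..m*(n+1)}"
    by (rule bij_from_inj[OF _ injf rng]) (simp_all add: card_V star_forest_V_def)
  define h where "h i = (if i = 0 then 0 else \<pi>I i)" for i
  have injw: "inj_on (wt n ori f) ?V"
  proof (rule inj_onI)
    fix x y assume xV: "x \<in> ?V" and yV: "y \<in> ?V" and e: "wt n ori f x = wt n ori f y"
    obtain j i where x: "x = (j, i)" by fastforce
    obtain j' i' where y: "y = (j', i')" by fastforce
    have j: "j < m" "i \<le> n" "j' < m" "i' \<le> n" using xV yV x y V by auto
    have big: "wt n ori f (j, i) = m * n + 2 + j * (n + 1) + h i \<and> h i < n + 1"
      if "j < m" "i \<le> n" "i = 0 \<or> \<not> ori i" for j i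
    proof (cases "i = 0")
      case True then show ?thesis using wC by (simp add: h_def)
    next
      case False
      then have no: "\<not> ori i" using that by simp
      have "h i = \<pi>I i" using False by (simp add: h_def)
      then show ?thesis using wI[OF False no] rI[OF memI[OF False that(2) no]] pq by simp
    qed
    have hinj: "i = i'" if "i \<le> n" "i' \<le> n" "i = 0 \<or> \<not> ori i" "i' = 0 \<or> \<not> ori i'" "h i = h i'" for i i'
    proof (cases "i = 0")
      case True
      show ?thesis
      proof (rule ccontr)
        assume "i \<noteq> i'"
        then have "i' \<noteq> 0" "\<not> ori i'" using True that(4) by auto
        then have "1 \<le> \<pi>I i'" using rI[OF memI[OF _ that(2)]] by blast
        moreover have "h i' = \<pi>I i'" using \<open>i' \<noteq> 0\<close> by (simp add: h_def)
        moreover have "h i = 0" using True by (simp add: h_def)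
        ultimately show False using that(5) by simp
      qed
    next
      case False
      then have ni: "\<not> ori i" using that(3) by simp
      show ?thesis
      proof (cases "i' = 0")
        case True
        have "1 \<le> \<pi>I i" using rI[OF memI[OF False that(1) ni]] by blast
        moreover have "h i = \<pi>I i" using False by (simp add: h_def)
        moreover have "h i' = 0" using True by (simp add: h_def)
        ultimately show ?thesis using that(5) by simp
      next
        case F: False
        then have ni': "\<not> ori i'" using that(4) by simp
        have "\<pi>I i = \<pi>I i'" using that(5) False F by (simp add: h_def)
        then show ?thesis using iI[OF memI[OF False that(1) ni] memI[OF F that(2) ni']] by simp
      qed
    qed
    have small: "wt n ori f (j, i) \<le> m * n" if "j < m" "i \<le> n" "i \<noteq> 0" "ori i" for j i
      using wO[OF that(3,4)] bdL[OF that(1,3,2)] by (simp add: g_def that)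
    show "x = y"
    proof (cases "i \<noteq> 0 \<and> ori i")
      case True
      show ?thesis
      proof (cases "i' \<noteq> 0 \<and> ori i'")
        case T: True
        have "j * n + 1 = j' * n + 1" using e x y wO True T by simp
        then have "j = j'" using n1 by simp
        moreover have "i = oo" using memO[OF _ j(2)] True by blast
        moreover have "i' = oo" using memO[OF _ j(4)] T by blast
        ultimately show ?thesis using x y by simp
      next
        case F: False
        have "i' = 0 \<or> \<not> ori i'" using F by blast
        note b = big[OF j(3,4) this]
        have "wt n ori f x \<le> m * n" using x small[OF j(1,2)] True by simp
        moreover have "wt n ori f y \<ge> m * n + 2" using y b by simp
        ultimately show ?thesis using e by simp
      qed
    next
      case False
      show ?thesis
      proof (cases "i' \<noteq> 0 \<and> ori i'")
        case T: True
        have "i = 0 \<or> \<not> ori i" using False by blast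
        note b = big[OF j(1,2) this]
        have "wt n ori f y \<le> m * n" using y small[OF j(3,4)] T by simp
        moreover have "wt n ori f x \<ge> m * n + 2" using x b by simp
        ultimately show ?thesis using e by simp
      next
        case F: False
        have c1: "i = 0 \<or> \<not> ori i" using False by blast
        have c2: "i' = 0 \<or> \<not> ori i'" using F by blast
        note b1 = big[OF j(1,2) c1] and b2 = big[OF j(3,4) c2]
        have "j * (n + 1) + h i = j' * (n + 1) + h i'"
          using e x y b1 b2 by simp
        then have "j = j' \<and> h i = h i'" using blk b1 b2 by blast
        then show ?thesis using hinj[OF j(2,4) c1 c2] x y by simp
      qed
    qed
  qed
  show ?thesis using bij injw by blast
qed

lemma caseP0:
  assumes m2: "m \<ge> 2" and n1: "n \<ge> 1"
    and p0: "card (Os n ori) = 0"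
  shows "\<exists>f. bij_betw f (star_forest_V m n) {1..m*(n+1)} \<and> inj_on (wt n ori f) (star_forest_V m n)"
proof -
  have q: "card (Is n ori) = n" using card_OI[of n ori] p0 by simp
  have Oe: "Os n ori = {}" using p0 fin_OI(1) by simp
  obtain \<pi>I where bI: "bij_betw \<pi>I (Is n ori) {1..n}" using perm_ex[OF fin_OI(2)] q by metis
  have memI: "i \<in> Is n ori" if "i \<noteq> 0" "i \<le> n" for i using that Oe by (auto simp: Is_def Os_def)
  have nori: "\<not> ori i" if "i \<noteq> 0" "i \<le> n" for i using memI[OF that] by (simp add: Is_def)
  have rI: "1 \<le> \<pi>I i \<and> \<pi>I i \<le> n" if "i \<noteq> 0" "i \<le> n" for i
    using bI memI[OF that] by (auto simp: bij_betw_def)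
  have iI: "i = i'" if "i \<noteq> 0" "i \<le> n" "i' \<noteq> 0" "i' \<le> n" "\<pi>I i = \<pi>I i'" for i i'
    using bI memI[OF that(1,2)] memI[OF that(3,4)] that(5) by (auto simp: bij_betw_def inj_on_def)
  define f where "f = (\<lambda>(j, i). if i = 0 then j + 1 else m + j * n + \<pi>I i)"
  let ?V = "star_forest_V m n"
  have V: "(j, i) \<in> ?V \<longleftrightarrow> j < m \<and> i \<le> n" for j i by (auto simp: star_forest_V_def)
  have fC: "f (j, 0) = j + 1" for j by (simp add: f_def)
  have fL: "f (j, i) = m + (j * n + \<pi>I i)" if "i \<noteq> 0" for j i using that by (simp add: f_def)
  have bdL: "j * n + \<pi>I i \<le> m * n" if "j < m" "i \<noteq> 0" "i \<le> n" for j i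
    using blk_le[OF that(1), of "\<pi>I i" n] rI[OF that(2,3)] by simp
  have wC: "wt n ori f (j, 0) = j + 1" for j by (simp add: wt_def fC Oe)
  have wI: "wt n ori f (j, i) = m + 1 + (j * (n + 1) + \<pi>I i)" if "i \<noteq> 0" "i \<le> n" for j i
    using that nori[OF that] by (simp add: wt_def fL fC algebra_simps)
  have injf: "inj_on f ?V"
  proof (rule inj_onI)
    fix x y assume xV: "x \<in> ?V" and yV: "y \<in> ?V" and e: "f x = f y"
    obtain j i where x: "x = (j, i)" by fastforce
    obtain j' i' where y: "y = (j', i')" by fastforce
    have j: "j < m" "i \<le> n" "j' < m" "i' \<le> n" using xV yV x y V by auto
    show "x = y"
    proof (cases "i = 0")
      case True
      show ?thesis
      proof (cases "i' = 0")
        case True then show ?thesis using e x y \<open>i = 0\<close> fC by simp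
      next
        case False
        have "f x = j + 1" using x \<open>i = 0\<close> fC by simp
        moreover have "f y > m" using y fL[OF False] rI[OF False j(4)] by simp
        ultimately show ?thesis using e j by simp
      qed
    next
      case False
      show ?thesis
      proof (cases "i' = 0")
        case True
        have "f y = j' + 1" using y True fC by simp
        moreover have "f x > m" using x fL[OF False] rI[OF False j(2)] by simp
        ultimately show ?thesis using e j by simp
      next
        case F: False
        have "j * n + \<pi>I i = j' * n + \<pi>I i'" using e x y fL False F by simp
        then have "j = j' \<and> \<pi>I i = \<pi>I i'" using blk1 rI[OF False j(2)] rI[OF F j(4)] by blast
        then show ?thesis using iI[OF False j(2) F j(4)] x y by blast
      qed
    qed
  qed
  have rng: "f ` ?V \<subseteq> {1..m*(n+1)}"
  proof
    fix z assume "z \<in> f ` ?V"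
    then obtain j i where z: "z = f (j, i)" and j: "j < m" "i \<le> n" using V by auto
    have "1 \<le> z \<and> z \<le> m * n + m"
    proof (cases "i = 0")
      case True then show ?thesis using z fC j by simp
    next
      case False then show ?thesis using z fL[OF False] bdL[OF j(1) False j(2)] m2 by simp
    qed
    then show "z \<in> {1..m*(n+1)}" by simp
  qed
  have bij: "bij_betw f ?V {1..m*(n+1)}"
    by (rule bij_from_inj[OF _ injf rng]) (simp_all add: card_V star_forest_V_def)
  have injw: "inj_on (wt n ori f) ?V"
  proof (rule inj_onI)
    fix x y assume xV: "x \<in> ?V" and yV: "y \<in> ?V" and e: "wt n ori f x = wt n ori f y"
    obtain j i where x: "x = (j, i)" by fastforce
    obtain j' i' where y: "y = (j', i')" by fastforce
    have j: "j < m" "i \<le> n" "j' < m" "i' \<le> n" using xV yV x y V by auto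
    show "x = y"
    proof (cases "i = 0")
      case True
      show ?thesis
      proof (cases "i' = 0")
        case True then show ?thesis using e x y \<open>i = 0\<close> wC by simp
      next
        case False
        then show ?thesis using e x y \<open>i = 0\<close> wC wI[OF False j(4)] j by simp
      qed
    next
      case False
      show ?thesis
      proof (cases "i' = 0")
        case True
        then show ?thesis using e x y wC wI[OF False j(2)] j by simp
      next
        case F: False
        have "j * (n + 1) + \<pi>I i = j' * (n + 1) + \<pi>I i'" using e x y wI[OF False j(2)] wI[OF F j(4)] by simp
        moreover have "\<pi>I i < n + 1" "\<pi>I i' < n + 1" using rI[OF False j(2)] rI[OF F j(4)] by auto
        ultimately have "j = j' \<and> \<pi>I i = \<pi>I i'" using blk by blast
        then show ?thesis using iI[OF False j(2) F j(4)] x y by blast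
      qed
    qed
  qed
  show ?thesis using bij injw by blast
qed


theorem mainTheorem7:
  fixes m n :: nat and ori :: "nat \<Rightarrow> bool"
  assumes "m \<ge> 2" and "n \<ge> 1"
  shows "D_antimagic (star_forest_V m n) (star_forest_A m n ori) {0} \<and>
         D_antimagic (star_forest_V m n) (star_forest_A m n ori) {0, 1}"
proof -
  let ?V = "star_forest_V m n" and ?A = "star_forest_A m n ori"
  obtain f where bij: "bij_betw f ?V {1..m*(n+1)}" and inj: "inj_on (wt n ori f) ?V"
  proof -
    consider "card (Os n ori) = 0" | "card (Os n ori) = 1" | "card (Os n ori) \<ge> 2" by linarith
    then have "\<exists>f. bij_betw f ?V {1..m*(n+1)} \<and> inj_on (wt n ori f) ?V"
    proof cases
      case 1 then show ?thesis by (rule caseP0[OF assms])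
    next
      case 2 then show ?thesis by (rule caseP1[OF assms])
    next
      case 3 then show ?thesis by (intro caseX[OF assms] disjI1)
    qed
    then show ?thesis using that by blast
  qed
  have cV: "card ?V = m * (n + 1)" by (rule card_V)
  have finV: "finite ?V" by (simp add: star_forest_V_def)
  have A1: "\<exists>u\<in>?V. \<exists>v\<in>?V. u \<noteq> v \<and> (u, v) \<in> ?A"
  proof (cases "ori 1")
    case True
    then have a: "((0, 0), (0, 1)) \<in> ?A" using assms unfolding star_forest_A_def by simp
    have b: "(0, 0) \<in> ?V" "(0, 1) \<in> ?V" using assms by (auto simp: star_forest_V_def)
    have "((0::nat, 0::nat)) \<noteq> (0, 1)" by simp
    then show ?thesis using a b by (intro bexI[of _ "(0, 0)"] bexI[of _ "(0, 1)"] conjI)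
  next
    case False
    then have a: "((0, 1), (0, 0)) \<in> ?A" using assms unfolding star_forest_A_def by simp
    have b: "(0, 0) \<in> ?V" "(0, 1) \<in> ?V" using assms by (auto simp: star_forest_V_def)
    have "((0::nat, 1::nat)) \<noteq> (0, 0)" by simp
    then show ?thesis using a b by (intro bexI[of _ "(0, 1)"] bexI[of _ "(0, 0)"] conjI)
  qed
  then have diam: "1 \<le> odiam ?V ?A" using odiam_ge1[OF finV] by blast
  have "inj_on f ?V" using bij by (simp add: bij_betw_def)
  moreover have "D_weight ?V ?A {0} f u = f u" if "u \<in> ?V" for u
    unfolding D_weight_def using nbhd0[OF that] by simp
  ultimately have inj0: "inj_on (D_weight ?V ?A {0} f) ?V" by (simp add: inj_on_def)
  have "D_weight ?V ?A {0,1} f u = wt n ori f u" if "u \<in> ?V" for u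
  proof -
    obtain j i where u0: "u = (j, i)" by (cases u)
    then have u: "j < m" "i \<le> n" using that by (auto simp: star_forest_V_def)
    show ?thesis using weight_star[OF u] u0 by simp
  qed
  then have inj1: "inj_on (D_weight ?V ?A {0,1} f) ?V" using inj by (simp add: inj_on_def)
  show ?thesis unfolding D_antimagic_def using bij inj0 inj1 diam cV by auto
qed

end
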